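(* Let $G=\langle a,b\mid a^n=1,\ b^t=a^k,\ b^{-1}ab=a^r\rangle$ with natural numbers $n,t,k,r$ satisfying $r^t\equiv1\pmod n$ and $k(r-1)\equiv0\pmod n$. Then the subgroups $H_{v,i,c}$, $(v,i,c)\in\mathfrak{N}$, are exactly all the normal subgroups of $G$, and they are pairwise distinct (distinct triples give distinct subgroups).
   Context: For a divisor $v$ of $n$, $o_v$ is the multiplicative order of $r$ modulo $v$. For integers $v,i,c$, $H_{v,i,c}=\langle a^v,a^ib^c\rangle$. $\mathfrak{N}=\{(v,i,c)\in\mathbb{Z}^3: v>0,\ v\mid n,\ c>0,\ c\mid t,\ 0\le i\le v-1,\ v\mid k+i\tfrac tc,\ o_v\mid c,\ v\mid i(r-1)\}$. *)

theory Defs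
  imports "HOL-Algebra.Algebra" "HOL-Number_Theory.Number_Theory"
begin

definition rels :: "('g, 'm) monoid_scheme \<Rightarrow> 'g \<Rightarrow> 'g \<Rightarrow> nat \<Rightarrow> nat \<Rightarrow> nat \<Rightarrow> nat \<Rightarrow> bool" where
  "rels H x y n t k r \<longleftrightarrow>
     x [^]\<^bsub>H\<^esub> n = \<one>\<^bsub>H\<^esub> \<and>
     y [^]\<^bsub>H\<^esub> t = x [^]\<^bsub>H\<^esub> k \<and>
     inv\<^bsub>H\<^esub> y \<otimes>\<^bsub>H\<^esub> x \<otimes>\<^bsub>H\<^esub> y = x [^]\<^bsub>H\<^esub> r"

text \<open>The test groups range over groups with carrier in nat; since finitely generated groups
  are countable, this is equivalent to the universal property over all groups.\<close>
definition presented_by :: "('g, 'm) monoid_scheme \<Rightarrow> 'g \<Rightarrow> 'g \<Rightarrow> nat \<Rightarrow> nat \<Rightarrow> nat \<Rightarrow> nat \<Rightarrow> bool" where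
  "presented_by G a b n t k r \<longleftrightarrow>
     group G \<and> a \<in> carrier G \<and> b \<in> carrier G \<and>
     generate G {a, b} = carrier G \<and> rels G a b n t k r \<and>
     (\<forall>(H :: nat monoid) x y. group H \<and> x \<in> carrier H \<and> y \<in> carrier H \<and> rels H x y n t k r
        \<longrightarrow> (\<exists>h \<in> hom G H. h a = x \<and> h b = y))"

definition Hsub :: "('g, 'm) monoid_scheme \<Rightarrow> 'g \<Rightarrow> 'g \<Rightarrow> int \<Rightarrow> int \<Rightarrow> int \<Rightarrow> 'g set" where
  "Hsub G a b v i c = generate G {a [^]\<^bsub>G\<^esub> v, a [^]\<^bsub>G\<^esub> i \<otimes>\<^bsub>G\<^esub> b [^]\<^bsub>G\<^esub> c}"

definition ov :: "nat \<Rightarrow> int \<Rightarrow> nat" where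
  "ov r v = ord (nat v) r"

definition Nset :: "nat \<Rightarrow> nat \<Rightarrow> nat \<Rightarrow> nat \<Rightarrow> (int \<times> int \<times> int) set" where
  "Nset n t k r = {(v, i, c). v > 0 \<and> v dvd int n \<and> c > 0 \<and> c dvd int t \<and> 0 \<le> i \<and> i \<le> v - 1 \<and>
      v dvd int k + i * (int t div c) \<and> int (ov r v) dvd c \<and> v dvd i * (int r - 1)}"

end

theory Submission
  imports Defs
begin


definition mmul :: "nat \<Rightarrow> nat \<Rightarrow> nat \<Rightarrow> nat \<Rightarrow> nat \<Rightarrow> nat \<Rightarrow> nat" where
 "mmul n t k r p q = ((p div n + q div n) mod t) * n
     + (p mod n * r ^ (q div n) + q mod n + k * ((p div n + q div n) div t)) mod n"

definition Mgrp :: "nat \<Rightarrow> nat \<Rightarrow> nat \<Rightarrow> nat \<Rightarrow> nat monoid" where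
 "Mgrp n t k r = \<lparr>carrier = {..< t*n}, monoid.mult = mmul n t k r, one = 0\<rparr>"

lemma enc_div: "(i::nat) < n \<Longrightarrow> (j*n+i) div n = j"
  by simp
lemma enc_mod: "(i::nat) < n \<Longrightarrow> (j*n+i) mod n = i"
  by simp


lemma modlem1: "((A mod n) * R + B + C) mod n = (A * R + B + C) mod (n::nat)"
proof -
  have "((A mod n) * R + B + C) mod n = ((A mod n * R) mod n + (B + C)) mod n"
    by (simp add: mod_add_left_eq add.assoc)
  also have "\<dots> = ((A * R) mod n + (B + C)) mod n" by (simp add: mod_mult_left_eq)
  also have "\<dots> = (A * R + B + C) mod n" by (simp add: mod_add_left_eq add.assoc)
  finally show ?thesis .
qed

lemma modlem2: "(P + Q mod n + K) mod n = (P + Q + K) mod (n::nat)"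
proof -
  have "(P + Q mod n + K) mod n = (Q mod n + (P + K)) mod n" by (simp add: ac_simps)
  also have "\<dots> = (Q + (P + K)) mod n" by (simp add: mod_add_left_eq)
  finally show ?thesis by (simp add: ac_simps)
qed

lemma div_mod_split: "(u::nat) div t + (u mod t + z) div t = (u + z) div t"
  using div_add1_eq[of u z t] div_add1_eq[of "u mod t" z t] by simp

locale mdata =
  fixes n t k r :: nat
  assumes n: "n > 0" and t: "t > 0" and rt: "[r ^ t = 1] (mod n)" and kr: "[k * r = k] (mod n)"
begin

lemma pow_mod_t: "[r ^ (x mod t) = r ^ x] (mod n)"
proof -
  have "r ^ x = r ^ (t * (x div t) + x mod t)" by simp
  also have "\<dots> = (r ^ t) ^ (x div t) * r ^ (x mod t)"
    by (simp only: power_add power_mult)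
  finally have "r ^ x = (r ^ t) ^ (x div t) * r ^ (x mod t)" .
  moreover have "[(r ^ t) ^ (x div t) * r ^ (x mod t) = 1 ^ (x div t) * r ^ (x mod t)] (mod n)"
    by (intro cong_mult cong_pow rt cong_refl)
  ultimately show ?thesis by (simp add: cong_sym)
qed

lemma k_pow: "[k * r ^ x = k] (mod n)"
proof (induction x)
  case 0 then show ?case by simp
next
  case (Suc x)
  have "k * r ^ Suc x = (k * r ^ x) * r" by simp
  moreover have "[(k * r ^ x) * r = k * r] (mod n)"
    by (intro cong_mult Suc cong_refl)
  ultimately have "[k * r ^ Suc x = k * r] (mod n)" by (simp add: ac_simps)
  then show ?case using kr by (rule cong_trans)
qed

abbreviation "mm \<equiv> mmul n t k r"

lemma mm_div: "mm p q div n = (p div n + q div n) mod t"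
  unfolding mmul_def using n by simp
lemma mm_mod: "mm p q mod n = (p mod n * r ^ (q div n) + q mod n + k * ((p div n + q div n) div t)) mod n"
  unfolding mmul_def using n by simp

lemma mm_eqI: "p div n = q div n \<Longrightarrow> p mod n = q mod n \<Longrightarrow> p = (q::nat)"
  by (metis div_mult_mod_eq)

lemma mm_assoc: "mm (mm p q) z = mm p (mm q z)"
proof (rule mm_eqI)
  define j1 j2 j3 i1 i2 i3 where "j1 = p div n" "j2 = q div n" "j3 = z div n"
     "i1 = p mod n" "i2 = q mod n" "i3 = z mod n"
  show "mm (mm p q) z div n = mm p (mm q z) div n"
    by (simp add: mm_div mod_add_left_eq mod_add_right_eq add.assoc)
  have e: "(j1+j2) div t + ((j1+j2) mod t + j3) div t = (j2+j3) div t + ((j2+j3) mod t + j1) div t"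
  proof -
    have "(j1+j2) div t + ((j1+j2) mod t + j3) div t = (j1+j2+j3) div t" by (rule div_mod_split)
    moreover have "(j2+j3) div t + ((j2+j3) mod t + j1) div t = (j2+j3+j1) div t" by (rule div_mod_split)
    ultimately show ?thesis by (simp add: ac_simps)
  qed
  have "mm (mm p q) z mod n = ((i1 * r ^ j2 + i2 + k * ((j1 + j2) div t)) mod n * r ^ j3 + i3
        + k * (((j1+j2) mod t + j3) div t)) mod n"
    by (simp add: mm_mod mm_div j1_j2_j3_i1_i2_i3_def)
  also have "\<dots> = ((i1 * r ^ j2 + i2 + k * ((j1 + j2) div t)) * r ^ j3 + i3
        + k * (((j1+j2) mod t + j3) div t)) mod n"
    by (rule modlem1)
  finally have L: "[mm (mm p q) z = (i1 * r ^ j2 + i2 + k * ((j1 + j2) div t)) * r ^ j3 + i3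
        + k * (((j1+j2) mod t + j3) div t)] (mod n)"
    by (simp add: cong_def)
  have E1: "(i1 * r ^ j2 + i2 + k * ((j1 + j2) div t)) * r ^ j3 + i3
        + k * (((j1+j2) mod t + j3) div t) = i1 * r^(j2+j3) + i2 * r^j3 + i3 + (k * r^j3) * ((j1 + j2) div t) + k * (((j1+j2) mod t + j3) div t)"
    by (simp add: algebra_simps power_add)
  have C1: "[i1 * r^(j2+j3) + i2 * r^j3 + i3 + (k * r^j3) * ((j1 + j2) div t) + k * (((j1+j2) mod t + j3) div t)
     = i1 * r^(j2+j3) + i2 * r^j3 + i3 + k * ((j1 + j2) div t) + k * (((j1+j2) mod t + j3) div t)] (mod n)"
    by (intro cong_add cong_mult k_pow cong_refl)
  have L1: "[mm (mm p q) z = i1 * r^(j2+j3) + i2 * r^j3 + i3 + k * ((j1 + j2) div t) + k * (((j1+j2) mod t + j3) div t)] (mod n)"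
    using cong_trans[OF L[unfolded E1] C1] .
  have L2: "[mm (mm p q) z = i1 * r^(j2+j3) + i2 * r^j3 + i3 + k * ((j1 + j2) div t + ((j1+j2) mod t + j3) div t)] (mod n)"
    using L1 by (simp only: distrib_left add.assoc)
  have "mm p (mm q z) mod n = (i1 * r ^ ((j2+j3) mod t) + (i2 * r ^ j3 + i3 + k * ((j2+j3) div t)) mod n + k * ((j1 + (j2+j3) mod t) div t)) mod n"
    by (simp add: mm_mod mm_div j1_j2_j3_i1_i2_i3_def)
  also have "\<dots> = (i1 * r ^ ((j2+j3) mod t) + (i2 * r ^ j3 + i3 + k * ((j2+j3) div t)) + k * ((j1 + (j2+j3) mod t) div t)) mod n"
    by (rule modlem2)
  finally have R: "[mm p (mm q z) = i1 * r ^ ((j2+j3) mod t) + (i2 * r ^ j3 + i3 + k * ((j2+j3) div t)) + k * ((j1 + (j2+j3) mod t) div t)] (mod n)"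
    by (simp add: cong_def)
  have C2: "[i1 * r ^ ((j2+j3) mod t) + (i2 * r ^ j3 + i3 + k * ((j2+j3) div t)) + k * ((j1 + (j2+j3) mod t) div t)
     = i1 * r ^ (j2+j3) + (i2 * r ^ j3 + i3 + k * ((j2+j3) div t)) + k * ((j1 + (j2+j3) mod t) div t)] (mod n)"
    by (intro cong_add cong_mult pow_mod_t cong_refl)
  have R1: "[mm p (mm q z) = i1 * r ^ (j2+j3) + (i2 * r ^ j3 + i3 + k * ((j2+j3) div t)) + k * ((j1 + (j2+j3) mod t) div t)] (mod n)"
    using cong_trans[OF R C2] .
  have R2: "[mm p (mm q z) = i1 * r^(j2+j3) + i2 * r^j3 + i3 + k * ((j2+j3) div t + ((j2+j3) mod t + j1) div t)] (mod n)"
    using R1 by (simp only: distrib_left add.assoc add.commute add.left_commute)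
  show "mm (mm p q) z mod n = mm p (mm q z) mod n"
    using L2 R2 e unfolding cong_def by simp
qed


lemma lt_tn: "J < t \<Longrightarrow> I < n \<Longrightarrow> J * n + I < t * (n::nat)"
proof -
  assume "J < t" "I < n"
  then have "J * n + I < J * n + n" by simp
  also have "\<dots> = Suc J * n" by simp
  also have "\<dots> \<le> t * n" using \<open>J < t\<close> by (intro mult_le_mono1) simp
  finally show ?thesis .
qed

lemma mm_lt: "mm p q < t * n"
  unfolding mmul_def using n t by (intro lt_tn) auto

lemma mm_0: "x < t * n \<Longrightarrow> mm 0 x = x"
proof -
  assume x: "x < t * n"
  then have xd: "x div n < t" using n by (simp add: less_mult_imp_div_less)
  then show ?thesis unfolding mmul_def by simp
qed

lemma M_group: "group (Mgrp n t k r)"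
proof (rule groupI)
  show "\<And>x y. x \<in> carrier (Mgrp n t k r) \<Longrightarrow> y \<in> carrier (Mgrp n t k r) \<Longrightarrow>
     x \<otimes>\<^bsub>Mgrp n t k r\<^esub> y \<in> carrier (Mgrp n t k r)"
    by (simp add: Mgrp_def mm_lt)
  show "\<one>\<^bsub>Mgrp n t k r\<^esub> \<in> carrier (Mgrp n t k r)"
    using n t by (simp add: Mgrp_def)
  show "\<And>x y z. x \<otimes>\<^bsub>Mgrp n t k r\<^esub> y \<otimes>\<^bsub>Mgrp n t k r\<^esub> z = x \<otimes>\<^bsub>Mgrp n t k r\<^esub> (y \<otimes>\<^bsub>Mgrp n t k r\<^esub> z)"
    by (simp add: Mgrp_def mm_assoc)
  show "\<And>x. x \<in> carrier (Mgrp n t k r) \<Longrightarrow> \<one>\<^bsub>Mgrp n t k r\<^esub> \<otimes>\<^bsub>Mgrp n t k r\<^esub> x = x"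
    by (simp add: Mgrp_def mm_0)
  fix x assume "x \<in> carrier (Mgrp n t k r)"
  then have x: "x < t * n" by (simp add: Mgrp_def)
  define j i where "j = x div n" "i = x mod n"
  have jt: "j < t" using x n unfolding j_i_def by (simp add: less_mult_imp_div_less)
  have inn: "i < n" using n unfolding j_i_def by simp
  define j' where "j' = (t - j) mod t"
  define ee where "ee = (j' + j) div t"
  define XX where "XX = i + k * ee"
  define i' where "i' = ((n - XX mod n) * r ^ (t - j)) mod n"
  define y where "y = j' * n + i'"
  have j't: "j' < t" using t unfolding j'_def by simp
  have i'n: "i' < n" using n unfolding i'_def by simp
  have yd: "y div n = j'" "y mod n = i'" using i'n unfolding y_def by simp_all
  have J0: "(j' + j) mod t = 0"
  proof (cases "j = 0")
    case True then show ?thesis unfolding j'_def by simp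
  next
    case False then have "j' = t - j" unfolding j'_def using jt by simp
    then show ?thesis using jt by simp
  qed
  have "[i' * r ^ j = (n - XX mod n) * r ^ (t - j) * r ^ j] (mod n)"
    unfolding i'_def cong_def by (simp add: mod_mult_left_eq)
  moreover have "(n - XX mod n) * r ^ (t - j) * r ^ j = (n - XX mod n) * r ^ t"
    using jt by (simp add: mult.assoc power_add[symmetric])
  moreover have "[(n - XX mod n) * r ^ t = (n - XX mod n) * 1] (mod n)"
    by (intro cong_mult cong_refl rt)
  ultimately have c1: "[i' * r ^ j = n - XX mod n] (mod n)"
    by (metis cong_trans mult_1_right)
  have "[i' * r ^ j + XX = n - XX mod n + XX] (mod n)"
    by (intro cong_add c1 cong_refl)
  moreover have "n - XX mod n + XX = n * (Suc (XX div n))"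
  proof -
    have "XX mod n < n" using n by simp
    moreover have "XX div n * n + XX mod n = XX" by simp
    ultimately have "n - XX mod n + XX = n + XX div n * n" by linarith
    then show ?thesis by simp
  qed
  ultimately have I0: "(i' * r ^ j + XX) mod n = 0"
    unfolding cong_def by simp
  have "mm y x = 0"
    unfolding mmul_def yd using J0 I0 unfolding j_i_def ee_def XX_def by (simp add: add.assoc)
  moreover have "y \<in> carrier (Mgrp n t k r)"
    unfolding Mgrp_def y_def using lt_tn[OF j't i'n] by simp
  ultimately show "\<exists>y\<in>carrier (Mgrp n t k r). y \<otimes>\<^bsub>Mgrp n t k r\<^esub> x = \<one>\<^bsub>Mgrp n t k r\<^esub>"
    by (auto simp: Mgrp_def)
qed

abbreviation "M \<equiv> Mgrp n t k r"
definition "xM = 1 mod n"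
definition "yM = (1 mod t) * n + (k * (1 div t)) mod n"

lemma xpow: "xM [^]\<^bsub>M\<^esub> (m::nat) = m mod n"
proof (induction m)
  case 0 then show ?case by (simp add: Mgrp_def)
next
  case (Suc m)
  have "xM [^]\<^bsub>M\<^esub> Suc m = (m mod n) \<otimes>\<^bsub>M\<^esub> xM" using Suc by simp
  also have "\<dots> = mm (m mod n) (1 mod n)" by (simp add: Mgrp_def xM_def)
  also have "\<dots> = (m mod n + 1 mod n) mod n" unfolding mmul_def using n by simp
  also have "\<dots> = Suc m mod n" using mod_add_eq[of m n 1] by simp
  finally show ?case .
qed

lemma ypow: "yM [^]\<^bsub>M\<^esub> (m::nat) = (m mod t) * n + (k * (m div t)) mod n"
proof (induction m)
  case 0 then show ?case by (simp add: Mgrp_def)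
next
  case (Suc m)
  define A where "A = (m mod t) * n + (k * (m div t)) mod n"
  have Ad: "A div n = m mod t" "A mod n = (k * (m div t)) mod n" unfolding A_def using n by simp_all
  have Yd: "yM div n = 1 mod t" "yM mod n = (k * (1 div t)) mod n" unfolding yM_def using n by simp_all
  have "yM [^]\<^bsub>M\<^esub> Suc m = A \<otimes>\<^bsub>M\<^esub> yM" using Suc by (simp add: A_def)
  also have "\<dots> = mm A yM" by (simp add: Mgrp_def)
  also have "\<dots> = ((m mod t + 1 mod t) mod t) * n + ((k * (m div t)) mod n * r ^ (1 mod t) + (k * (1 div t)) mod n + k * ((m mod t + 1 mod t) div t)) mod n"
    unfolding mmul_def Ad Yd ..
  also have "(m mod t + 1 mod t) mod t = Suc m mod t" using mod_add_eq[of m t 1] by simp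
  also have "((k * (m div t)) mod n * r ^ (1 mod t) + (k * (1 div t)) mod n + k * ((m mod t + 1 mod t) div t)) mod n
      = (k * (Suc m div t)) mod n"
  proof -
    have "[(k * (m div t)) mod n * r ^ (1 mod t) = (k * r ^ (1 mod t)) * (m div t)] (mod n)"
      unfolding cong_def by (simp add: mod_mult_left_eq ac_simps)
    moreover have "[(k * r ^ (1 mod t)) * (m div t) = k * (m div t)] (mod n)"
      by (intro cong_mult k_pow cong_refl)
    ultimately have "[(k * (m div t)) mod n * r ^ (1 mod t) = k * (m div t)] (mod n)"
      by (rule cong_trans)
    then have "[(k * (m div t)) mod n * r ^ (1 mod t) + (k * (1 div t)) mod n + k * ((m mod t + 1 mod t) div t)
       = k * (m div t) + k * (1 div t) + k * ((m mod t + 1 mod t) div t)] (mod n)"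
      by (intro cong_add cong_refl) (simp_all add: cong_def)
    moreover have "k * (m div t) + k * (1 div t) + k * ((m mod t + 1 mod t) div t) = k * (Suc m div t)"
      using div_add1_eq[of m 1 t] by (simp add: distrib_left)
    ultimately show ?thesis unfolding cong_def by simp
  qed
  finally show ?case .
qed

lemma M_rels: "rels M xM yM n t k r"
proof -
  interpret Mg: group M by (rule M_group)
  have xc: "xM \<in> carrier M" unfolding xM_def Mgrp_def using n t lt_tn[of 0 "1 mod n"] by simp
  have yc: "yM \<in> carrier M" unfolding yM_def Mgrp_def using n t lt_tn[of "1 mod t" "(k * (1 div t)) mod n"] by simp
  have 1: "xM [^]\<^bsub>M\<^esub> n = \<one>\<^bsub>M\<^esub>" unfolding xpow by (simp add: Mgrp_def)
  have 2: "yM [^]\<^bsub>M\<^esub> t = xM [^]\<^bsub>M\<^esub> k" using t by (simp add: xpow ypow)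
  have "xM \<otimes>\<^bsub>M\<^esub> yM = yM \<otimes>\<^bsub>M\<^esub> xM [^]\<^bsub>M\<^esub> r"
  proof -
    have Yd: "yM div n = 1 mod t" "yM mod n = (k * (1 div t)) mod n" unfolding yM_def using n by simp_all
    have Xd: "xM div n = 0" "xM mod n = 1 mod n" unfolding xM_def using n by simp_all
    have Rd: "(r mod n) div n = 0" "(r mod n) mod n = r mod n" using n by simp_all
    have od: "(1 mod t) div t = 0" using t by simp
    have "xM \<otimes>\<^bsub>M\<^esub> yM = mm xM yM" by (simp add: Mgrp_def)
    also have "\<dots> = ((xM div n + yM div n) mod t) * n + (xM mod n * r^(yM div n) + yM mod n + k*((xM div n + yM div n) div t)) mod n"
      by (simp only: mmul_def)
    also have "\<dots> = (1 mod t) * n + ((1 mod n) * r ^ (1 mod t) + (k * (1 div t)) mod n) mod n"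
      by (simp only: Xd Yd od add_0 mod_mod_trivial mult_0_right add_0_right)
    finally have e1: "xM \<otimes>\<^bsub>M\<^esub> yM = (1 mod t) * n + ((1 mod n) * r ^ (1 mod t) + (k * (1 div t)) mod n) mod n" .
    have "yM \<otimes>\<^bsub>M\<^esub> xM [^]\<^bsub>M\<^esub> r = mm yM (r mod n)" unfolding xpow by (simp add: Mgrp_def)
    also have "\<dots> = ((yM div n + (r mod n) div n) mod t) * n + (yM mod n * r^((r mod n) div n) + (r mod n) mod n + k*((yM div n + (r mod n) div n) div t)) mod n"
      by (simp only: mmul_def)
    also have "\<dots> = (1 mod t) * n + ((k * (1 div t)) mod n + r mod n) mod n"
      by (simp only: Rd Yd od add_0 mod_mod_trivial mult_0_right add_0_right power_0 mult_1_right)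
    finally have e2: "yM \<otimes>\<^bsub>M\<^esub> xM [^]\<^bsub>M\<^esub> r = (1 mod t) * n + ((k * (1 div t)) mod n + r mod n) mod n" .
    note e1 e2
    moreover have "((1 mod n) * r ^ (1 mod t) + (k * (1 div t)) mod n) mod n = ((k * (1 div t)) mod n + r mod n) mod n"
    proof -
      have "[(1 mod n) * r ^ (1 mod t) = 1 * r ^ 1] (mod n)"
        by (intro cong_mult pow_mod_t) (simp add: cong_def)
      then have "[(1 mod n) * r ^ (1 mod t) + (k * (1 div t)) mod n = r mod n + (k * (1 div t)) mod n] (mod n)"
        by (intro cong_add cong_refl) (simp add: cong_def)
      then show ?thesis by (simp add: cong_def add.commute)
    qed
    ultimately show ?thesis by simp
  qed
  then have 3: "inv\<^bsub>M\<^esub> yM \<otimes>\<^bsub>M\<^esub> xM \<otimes>\<^bsub>M\<^esub> yM = xM [^]\<^bsub>M\<^esub> r"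
    using xc yc by (simp add: Mg.m_assoc Mg.l_inv flip: Mg.m_assoc[of "inv\<^bsub>M\<^esub> yM" yM])
  show ?thesis unfolding rels_def using 1 2 3 by simp
qed

end

lemma model_facts:
  assumes "presented_by G a b n t k r" "n > 0" "t > 0" "[r ^ t = 1] (mod n)" "[k * r = k] (mod n)"
  shows "(\<forall>z::nat. a [^]\<^bsub>G\<^esub> z = \<one>\<^bsub>G\<^esub> \<longrightarrow> n dvd z) \<and>
    (\<forall>(z::nat) (y::nat) (z'::nat) (y'::nat). a [^]\<^bsub>G\<^esub> z \<otimes>\<^bsub>G\<^esub> b [^]\<^bsub>G\<^esub> y = a [^]\<^bsub>G\<^esub> z' \<otimes>\<^bsub>G\<^esub> b [^]\<^bsub>G\<^esub> y'
        \<longrightarrow> y mod t = y' mod t)"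
proof -
  interpret md: mdata n t k r using assms by unfold_locales
  have G: "group G" and ac: "a \<in> carrier G" and bc: "b \<in> carrier G"
    using assms(1) unfolding presented_by_def by auto
  have xc: "md.xM \<in> carrier md.M" unfolding md.xM_def Mgrp_def using assms md.lt_tn[of 0 "1 mod n"] by simp
  have yc: "md.yM \<in> carrier md.M" unfolding md.yM_def Mgrp_def using assms md.lt_tn[of "1 mod t" "(k * (1 div t)) mod n"] by simp
  obtain h where h: "h \<in> hom G md.M" "h a = md.xM" "h b = md.yM"
    using assms(1) md.M_group xc yc md.M_rels unfolding presented_by_def by blast
  have hp: "h (a [^]\<^bsub>G\<^esub> z) = z mod n" for z :: nat
    using hom_nat_pow[OF h(1) ac G md.M_group] h(2) md.xpow by simp
  have hq: "h (b [^]\<^bsub>G\<^esub> y) = (y mod t) * n + (k * (y div t)) mod n" for y :: nat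
    using hom_nat_pow[OF h(1) bc G md.M_group] h(3) md.ypow by simp
  have h1: "h \<one>\<^bsub>G\<^esub> = 0" using hom_one[OF h(1) G md.M_group] by (simp add: Mgrp_def)
  have hab: "h (a [^]\<^bsub>G\<^esub> z \<otimes>\<^bsub>G\<^esub> b [^]\<^bsub>G\<^esub> y) div n = y mod t" for z y :: nat
  proof -
    have "h (a [^]\<^bsub>G\<^esub> z \<otimes>\<^bsub>G\<^esub> b [^]\<^bsub>G\<^esub> y) = md.mm (z mod n) ((y mod t) * n + (k * (y div t)) mod n)"
      using hom_mult[OF h(1)] G ac bc hp hq by (simp add: group.is_monoid monoid.nat_pow_closed Mgrp_def)
    then show ?thesis using assms(2) by (simp add: md.mm_div)
  qed
  show ?thesis
  proof (intro conjI allI impI)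
    fix z :: nat assume "a [^]\<^bsub>G\<^esub> z = \<one>\<^bsub>G\<^esub>"
    then have "z mod n = 0" using hp[of z] h1 by simp
    then show "n dvd z" by auto
  next
    fix z y z' y' :: nat
    assume "a [^]\<^bsub>G\<^esub> z \<otimes>\<^bsub>G\<^esub> b [^]\<^bsub>G\<^esub> y = a [^]\<^bsub>G\<^esub> z' \<otimes>\<^bsub>G\<^esub> b [^]\<^bsub>G\<^esub> y'"
    then show "y mod t = y' mod t" using hab[of z y] hab[of z' y'] by simp
  qed
qed




lemma (in group) subgroup_nat_pow_closed: "subgroup K G \<Longrightarrow> x \<in> K \<Longrightarrow> x [^] (m::nat) \<in> K"
  by (induction m) (auto simp: subgroup.one_closed subgroup.m_closed)

lemma (in group) conj_gen:
  assumes S: "S \<subseteq> carrier G" and g: "g \<in> carrier G"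
    and h: "\<And>s. s \<in> S \<Longrightarrow> g \<otimes> s \<otimes> inv g \<in> generate G S"
  shows "x \<in> generate G S \<Longrightarrow> g \<otimes> x \<otimes> inv g \<in> generate G S"
proof (induct x rule: generate.induct)
  case one thus ?case using g generate.one by auto
next
  case (incl h) thus ?case using h by blast
next
  case (inv x)
  hence x: "x \<in> carrier G" using S by auto
  hence "inv (g \<otimes> x \<otimes> (inv g)) = g \<otimes> (inv x) \<otimes> (inv g)"
    using g by (simp add: inv_mult_group m_assoc)
  thus ?case
    using generate_m_inv_closed[OF S h[OF inv]] by simp
next
  case (eng h1 h2)
  note in_carrier = eng(1,3)[THEN generate_in_carrier[OF S]]
  have "g \<otimes> (h1 \<otimes> h2) \<otimes> inv g = (g \<otimes> h1 \<otimes> inv g) \<otimes> (g \<otimes> h2 \<otimes> inv g)"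
    using in_carrier g by (simp add: inv_solve_left m_assoc)
  thus ?case
    using generate.eng[OF eng(2,4)] by simp
qed

locale pres = group G for G (structure) +
  fixes a b :: 'a and n t k r :: nat
  assumes ac[simp]: "a \<in> carrier G" and bc[simp]: "b \<in> carrier G" and n: "n > 0" and t: "t > 0"
    and an: "a [^] n = \<one>" and bt: "b [^] t = a [^] k" and cj: "inv b \<otimes> a \<otimes> b = a [^] r"
    and rt: "[r ^ t = 1] (mod n)" and kr: "[k * r = k] (mod n)"
    and gen: "generate G {a, b} = carrier G"
    and U1: "\<And>z::nat. a [^] z = \<one> \<Longrightarrow> n dvd z"
    and U2: "\<And>(z::nat) (y::nat) (z'::nat) (y'::nat). a [^] z \<otimes> b [^] y = a [^] z' \<otimes> b [^] y' \<Longrightarrow> y mod t = y' mod t"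
begin

definition "s = r ^ (t - 1)"

lemma sr: "[s * r = 1] (mod n)"
proof -
  have "s * r = r ^ t" unfolding s_def using t by (simp add: power_Suc2[symmetric])
  then show ?thesis using rt by simp
qed

lemma apow_mod: "a [^] (p::nat) = a [^] (p mod n)"
proof -
  have "a [^] p = a [^] (n * (p div n) + p mod n)" by simp
  also have "\<dots> = (a [^] n) [^] (p div n) \<otimes> a [^] (p mod n)"
    by (simp only: nat_pow_mult[symmetric] nat_pow_pow ac)
  also have "\<dots> = a [^] (p mod n)" by (simp add: an)
  finally show ?thesis .
qed

lemma apow_cong: "[p = q] (mod n) \<Longrightarrow> a [^] (p::nat) = a [^] (q::nat)"
  unfolding cong_def by (metis apow_mod)

lemma apow_eq: "a [^] (p::nat) = a [^] (q::nat) \<Longrightarrow> [p = q] (mod n)"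
proof -
  have main: "a [^] (p::nat) = a [^] (q::nat) \<Longrightarrow> p \<le> q \<Longrightarrow> [p = q] (mod n)" for p q
  proof -
    assume e: "a [^] p = a [^] q" and le: "p \<le> q"
    have "a [^] p \<otimes> a [^] (q - p) = a [^] q"
      using le by (simp add: nat_pow_mult)
    then have "a [^] p \<otimes> a [^] (q - p) = a [^] p \<otimes> \<one>"
      using e by simp
    then have "a [^] (q - p) = \<one>" by (simp del: r_one)
    then have "n dvd q - p" by (rule U1)
    then have "[q = p] (mod n)" using le by (simp add: cong_altdef_nat)
    then show ?thesis by (rule cong_sym)
  qed
  assume "a [^] p = a [^] q"
  then show ?thesis using main[of p q] main[of q p] by (metis cong_sym nat_le_linear)
qed

lemma inv_apow: "inv (a [^] (x::nat)) = a [^] ((n - 1) * x)"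
proof (rule inv_equality)
  have "a [^] ((n - 1) * x) \<otimes> a [^] x = a [^] (n * x)"
    using n by (simp add: nat_pow_mult algebra_simps)
  also have "\<dots> = \<one>" by (simp add: nat_pow_pow[symmetric] an)
  finally show "a [^] ((n - 1) * x) \<otimes> a [^] x = \<one>" .
qed simp_all

lemma comm1: "a \<otimes> b = b \<otimes> a [^] r"
proof -
  have "b \<otimes> (inv b \<otimes> a \<otimes> b) = a \<otimes> b" by (simp add: m_assoc[symmetric])
  then show ?thesis using cj by simp
qed

lemma comm2: "a [^] (y::nat) \<otimes> b = b \<otimes> a [^] (y * r)"
proof (induction y)
  case 0 then show ?case by simp
next
  case (Suc y)
  have "a [^] Suc y \<otimes> b = a [^] y \<otimes> (a \<otimes> b)" by (simp add: m_assoc)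
  also have "\<dots> = (a [^] y \<otimes> b) \<otimes> a [^] r" by (simp add: comm1 m_assoc)
  also have "\<dots> = b \<otimes> a [^] (Suc y * r)" by (simp add: Suc m_assoc nat_pow_mult add.commute)
  finally show ?case .
qed

lemma comm3: "a [^] (y::nat) \<otimes> b [^] (m::nat) = b [^] m \<otimes> a [^] (y * r ^ m)"
proof (induction m arbitrary: y)
  case 0 then show ?case by simp
next
  case (Suc m)
  have "a [^] y \<otimes> b [^] Suc m = (a [^] y \<otimes> b [^] m) \<otimes> b" by (simp add: m_assoc)
  also have "\<dots> = b [^] m \<otimes> (a [^] (y * r ^ m) \<otimes> b)" by (simp add: Suc m_assoc)
  also have "\<dots> = b [^] Suc m \<otimes> a [^] (y * r ^ Suc m)" by (simp add: comm2 m_assoc ac_simps)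
  finally show ?case .
qed

lemma comm4: "b [^] (m::nat) \<otimes> a [^] (x::nat) = a [^] (x * s ^ m) \<otimes> b [^] m"
proof -
  have "a [^] (x * s ^ m) \<otimes> b [^] m = b [^] m \<otimes> a [^] (x * s ^ m * r ^ m)" by (rule comm3)
  also have "a [^] (x * s ^ m * r ^ m) = a [^] x"
  proof (rule apow_cong)
    have eq: "x * s ^ m * r ^ m = x * (s * r) ^ m" by (simp add: power_mult_distrib ac_simps)
    have "[x * (s * r) ^ m = x * 1 ^ m] (mod n)"
      by (intro cong_mult cong_pow sr cong_refl)
    then have c: "[x * (s * r) ^ m = x] (mod n)" by simp
    show "[x * s ^ m * r ^ m = x] (mod n)" by (subst eq) (rule c)
  qed
  finally show ?thesis by simp
qed

lemma prodform: "(a [^] (x::nat) \<otimes> b [^] (y::nat)) \<otimes> (a [^] (x'::nat) \<otimes> b [^] (y'::nat))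
   = a [^] (x + x' * s ^ y) \<otimes> b [^] (y + y')"
proof -
  have "(a [^] x \<otimes> b [^] y) \<otimes> (a [^] x' \<otimes> b [^] y') = a [^] x \<otimes> (b [^] y \<otimes> a [^] x') \<otimes> b [^] y'"
    by (simp add: m_assoc)
  also have "\<dots> = a [^] x \<otimes> (a [^] (x' * s ^ y) \<otimes> b [^] y) \<otimes> b [^] y'" by (simp add: comm4)
  also have "\<dots> = a [^] (x + x' * s ^ y) \<otimes> b [^] (y + y')"
    by (simp add: m_assoc nat_pow_mult[symmetric])
  finally show ?thesis .
qed

lemma bnt: "b [^] (n * t) = \<one>"
proof -
  have "b [^] (n * t) = (b [^] t) [^] n" by (simp add: nat_pow_pow mult.commute)
  also have "\<dots> = (a [^] n) [^] k" by (simp add: bt nat_pow_pow mult.commute)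
  finally show ?thesis by (simp add: an)
qed

lemma inv_b: "inv b = b [^] (n * t - 1)"
proof (rule inv_equality)
  have "n * t \<ge> 1" using n t by simp
  then have "b [^] (n * t - 1) \<otimes> b = b [^] (n * t)" by (simp add: nat_pow_Suc[symmetric] del: nat_pow_Suc)
  then show "b [^] (n * t - 1) \<otimes> b = \<one>" using bnt by simp
qed simp_all

lemma form: "g \<in> carrier G \<Longrightarrow> \<exists>(x::nat) (y::nat). g = a [^] x \<otimes> b [^] y"
proof -
  assume "g \<in> carrier G"
  then have "g \<in> generate G {a, b}" using gen by simp
  then show ?thesis
  proof (induction rule: generate.induct)
    case one then show ?case by (intro exI[of _ "0::nat"]) simp
  next
    case (incl h)
    then show ?case
    proof
      assume "h = a" then show ?thesis by (intro exI[of _ 1] exI[of _ 0]) simp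
    next
      assume "h \<in> {b}" then show ?thesis by (intro exI[of _ 0] exI[of _ 1]) simp
    qed
  next
    case (inv h)
    then show ?case
    proof
      assume "h = a" then show ?thesis using inv_apow[of 1] by (intro exI[of _ "n - 1"] exI[of _ 0]) simp
    next
      assume "h \<in> {b}" then show ?thesis using inv_b by (intro exI[of _ 0] exI[of _ "n * t - 1"]) simp
    qed
  next
    case (eng h1 h2)
    then obtain x y x' y' :: nat where "h1 = a [^] x \<otimes> b [^] (y::nat)" "h2 = a [^] x' \<otimes> b [^] (y'::nat)" by blast
    then show ?case using prodform by blast
  qed
qed

lemma form_red: "a [^] (x::nat) \<otimes> b [^] (y::nat) = a [^] ((x + k * (y div t)) mod n) \<otimes> b [^] (y mod t)"
proof -
  have "b [^] y = b [^] (t * (y div t) + y mod t)" by simp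
  also have "\<dots> = (b [^] t) [^] (y div t) \<otimes> b [^] (y mod t)"
    by (simp only: nat_pow_mult[symmetric] nat_pow_pow bc)
  also have "\<dots> = a [^] (k * (y div t)) \<otimes> b [^] (y mod t)" by (simp add: bt nat_pow_pow)
  finally have "a [^] x \<otimes> b [^] y = a [^] x \<otimes> (a [^] (k * (y div t)) \<otimes> b [^] (y mod t))" by simp
  also have "\<dots> = a [^] (x + k * (y div t)) \<otimes> b [^] (y mod t)" by (simp add: m_assoc[symmetric] nat_pow_mult)
  finally show ?thesis by (simp add: apow_mod[of "x + _"])
qed

lemma fin: "finite (carrier G)"
proof -
  have "carrier G \<subseteq> (\<lambda>(x, y). a [^] x \<otimes> b [^] y) ` ({..<n} \<times> {..<(t::nat)})"
  proof
    fix g assume "g \<in> carrier G"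
    then obtain x y :: nat where g: "g = a [^] x \<otimes> b [^] y" using form by blast
    have "g = a [^] ((x + k * (y div t)) mod n) \<otimes> b [^] (y mod t)" using g form_red by simp
    moreover have "((x + k * (y div t)) mod n, y mod t) \<in> {..<n} \<times> {..<t}" using n t by simp
    ultimately show "g \<in> (\<lambda>(x, y). a [^] x \<otimes> b [^] y) ` ({..<n} \<times> {..<t})" by force
  qed
  then show ?thesis by (rule finite_subset) simp
qed

lemma inv_pow: "g \<in> carrier G \<Longrightarrow> inv g = g [^] (order G - 1)"
proof (rule inv_equality)
  assume g: "g \<in> carrier G"
  have "carrier G \<noteq> {}" by auto
  then have "order G \<ge> 1" using fin unfolding order_def by (simp add: card_gt_0_iff Suc_le_eq)
  then have "g [^] (order G - 1) \<otimes> g = g [^] (order G)" by (simp add: nat_pow_Suc[symmetric] del: nat_pow_Suc)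
  then show "g [^] (order G - 1) \<otimes> g = \<one>" using pow_order_eq_1[OF g] by simp
qed simp_all

lemma closed_subgroup:
  assumes "S \<subseteq> carrier G" "\<one> \<in> S" "\<And>x y. x \<in> S \<Longrightarrow> y \<in> S \<Longrightarrow> x \<otimes> y \<in> S"
  shows "subgroup S G"
proof (rule subgroupI)
  show "S \<subseteq> carrier G" "S \<noteq> {}" using assms by auto
  show "x \<otimes> y \<in> S" if "x \<in> S" "y \<in> S" for x y using assms that by blast
  fix x assume x: "x \<in> S"
  have "x [^] (m::nat) \<in> S" for m by (induction m) (use assms x in auto)
  then show "inv x \<in> S" using inv_pow x assms(1) by auto
qed

end



context pres begin

lemma inv_cancel1: "x \<in> carrier G \<Longrightarrow> y \<in> carrier G \<Longrightarrow> x \<otimes> (inv x \<otimes> y) = y"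
  by (simp add: m_assoc[symmetric])

lemma elim:
  assumes K: "subgroup K G" and g1: "a [^] (z::nat) \<otimes> b [^] ((y1::nat) + y2) \<in> K"
    and g2: "a [^] (z1::nat) \<otimes> b [^] (y2::nat) \<in> K"
  shows "a [^] (z + (n - 1) * z1 * s ^ y1) \<otimes> b [^] y1 \<in> K"
proof -
  have "(a [^] z \<otimes> b [^] (y1 + y2)) \<otimes> inv (a [^] z1 \<otimes> b [^] y2) \<in> K"
    using K g1 g2 by (simp add: subgroup.m_closed subgroup.m_inv_closed)
  moreover have "(a [^] z \<otimes> b [^] (y1 + y2)) \<otimes> inv (a [^] z1 \<otimes> b [^] y2)
      = (a [^] z \<otimes> b [^] y1) \<otimes> (a [^] ((n - 1) * z1) \<otimes> b [^] (0::nat))"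
  proof -
    have "(a [^] z \<otimes> b [^] (y1 + y2)) \<otimes> inv (a [^] z1 \<otimes> b [^] y2)
        = a [^] z \<otimes> b [^] y1 \<otimes> (b [^] y2 \<otimes> inv (b [^] y2)) \<otimes> inv (a [^] z1)"
      by (simp add: inv_mult_group m_assoc nat_pow_mult[symmetric] inv_cancel1)
    also have "\<dots> = (a [^] z \<otimes> b [^] y1) \<otimes> (a [^] ((n - 1) * z1) \<otimes> b [^] (0::nat))"
      by (simp add: inv_apow)
    finally show ?thesis .
  qed
  ultimately show ?thesis using prodform[of z y1 "(n - 1) * z1" 0] by simp
qed

lemma diffl:
  assumes K: "subgroup K G" and "a [^] (x::nat) \<otimes> b [^] (y::nat) \<in> K" and "a [^] (x'::nat) \<otimes> b [^] y \<in> K"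
  shows "a [^] (x + (n - 1) * x') \<in> K"
  using elim[OF K, of x 0 y x'] assms by simp

lemma congfix:
  assumes "v dvd n" "v dvd x + (n - 1) * x'"
  shows "[x = x'] (mod v)"
proof -
  have "[x + (n - 1) * x' = 0] (mod v)" using assms(2) by (simp add: cong_0_iff)
  then have "[x + (n - 1) * x' + x' = 0 + x'] (mod v)" by (intro cong_add cong_refl)
  moreover have "x + (n - 1) * x' + x' = x + n * x'" using n by (cases n) simp_all
  ultimately have 1: "[x + n * x' = x'] (mod v)" by (simp add: add.assoc)
  have "[n * x' = 0] (mod v)" using assms(1) by (simp add: cong_0_iff)
  then have "[x + n * x' = x + 0] (mod v)" by (intro cong_add cong_refl)
  then have "[x = x + n * x'] (mod v)" by (simp add: cong_sym)
  then show ?thesis using 1 by (rule cong_trans)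
qed

lemma apow_in_sub: "subgroup K G \<Longrightarrow> a [^] (v::nat) \<in> K \<Longrightarrow> v dvd m \<Longrightarrow> a [^] (m::nat) \<in> K"
  by (auto simp: nat_pow_pow[symmetric] subgroup_nat_pow_closed)

definition Hs :: "nat \<Rightarrow> nat \<Rightarrow> nat \<Rightarrow> 'a set" where
  "Hs v i c = generate G {a [^] v, a [^] i \<otimes> b [^] c}"

definition cond :: "nat \<Rightarrow> nat \<Rightarrow> nat \<Rightarrow> bool" where
  "cond v i c \<longleftrightarrow> 0 < v \<and> v dvd n \<and> 0 < c \<and> c dvd t \<and> i < v \<and> v dvd k + i * (t div c)
     \<and> Pocklington.ord v r dvd c \<and> [i * r = i] (mod v)"

lemma Hs_sub: "subgroup (Hs v i c) G"
  unfolding Hs_def by (rule generate_is_subgroup) simp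

lemma Hs_gens: "a [^] v \<in> Hs v i c" "a [^] i \<otimes> b [^] c \<in> Hs v i c"
  unfolding Hs_def by (auto intro: generate.incl)

lemma cond_sc: assumes "cond v i c" shows "[r ^ c = 1] (mod v)" "[s ^ c = 1] (mod v)"
proof -
  show rc: "[r ^ c = 1] (mod v)" by (rule ord_divides[THEN iffD2]) (use assms in \<open>simp add: cond_def\<close>)
  have "[s * r = 1] (mod v)" using sr assms unfolding cond_def by (blast intro: cong_dvd_modulus_nat)
  then have "[(s * r) ^ c = 1 ^ c] (mod v)" by (rule cong_pow)
  then have 1: "[s ^ c * r ^ c = 1] (mod v)" by (simp add: power_mult_distrib)
  have "[s ^ c * r ^ c = s ^ c * 1] (mod v)" by (intro cong_mult cong_refl rc)
  then have "[s ^ c = s ^ c * r ^ c] (mod v)" by (simp add: cong_sym)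
  then show "[s ^ c = 1] (mod v)" using 1 by (rule cong_trans)
qed

lemma powform0: "\<exists>z::nat. (a [^] (i::nat) \<otimes> b [^] (c::nat)) [^] (q::nat) = a [^] z \<otimes> b [^] (c * q)"
proof (induction q)
  case 0 show ?case by (intro exI[of _ "0::nat"]) simp
next
  case (Suc q)
  then obtain z :: nat where z: "(a [^] i \<otimes> b [^] c) [^] q = a [^] z \<otimes> b [^] (c * q)" by blast
  have "(a [^] i \<otimes> b [^] c) [^] Suc q = (a [^] z \<otimes> b [^] (c * q)) \<otimes> (a [^] i \<otimes> b [^] c)"
    using z by simp
  also have "\<dots> = a [^] (z + i * s ^ (c * q)) \<otimes> b [^] (c * q + c)" by (rule prodform)
  also have "c * q + c = c * Suc q" by simp
  finally show ?case by blast
qed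

lemma powform:
  assumes sc: "[s ^ c = 1] (mod v)"
  shows "\<exists>z::nat. (a [^] (i::nat) \<otimes> b [^] (c::nat)) [^] (q::nat) = a [^] z \<otimes> b [^] (c * q) \<and> [z = i * q] (mod v)"
proof (induction q)
  case 0 show ?case by (intro exI[of _ "0::nat"]) simp
next
  case (Suc q)
  then obtain z :: nat where z: "(a [^] i \<otimes> b [^] c) [^] q = a [^] z \<otimes> b [^] (c * q)" "[z = i * q] (mod v)" by blast
  have "(a [^] i \<otimes> b [^] c) [^] Suc q = (a [^] z \<otimes> b [^] (c * q)) \<otimes> (a [^] i \<otimes> b [^] c)"
    using z by simp
  also have "\<dots> = a [^] (z + i * s ^ (c * q)) \<otimes> b [^] (c * q + c)" by (rule prodform)
  also have "c * q + c = c * Suc q" by simp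
  finally have e: "(a [^] i \<otimes> b [^] c) [^] Suc q = a [^] (z + i * s ^ (c * q)) \<otimes> b [^] (c * Suc q)" .
  have "[(s ^ c) ^ q = 1 ^ q] (mod v)" by (rule cong_pow[OF sc])
  then have "[s ^ (c * q) = 1] (mod v)" by (simp add: power_mult)
  then have "[z + i * s ^ (c * q) = i * q + i * 1] (mod v)" by (intro cong_add cong_mult z(2) cong_refl)
  then have "[z + i * s ^ (c * q) = i * Suc q] (mod v)" by (simp add: algebra_simps)
  then show ?case using e by blast
qed

definition Tset :: "nat \<Rightarrow> nat \<Rightarrow> nat \<Rightarrow> 'a set" where
  "Tset v i c = {g \<in> carrier G. \<exists>x q::nat. g = a [^] x \<otimes> b [^] (c * q) \<and> [x = i * q] (mod v)}"

lemma T_sub: assumes sc: "[s ^ c = 1] (mod v)" shows "subgroup (Tset v i c) G"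
proof (rule closed_subgroup)
  show "Tset v i c \<subseteq> carrier G" unfolding Tset_def by auto
  show "\<one> \<in> Tset v i c" unfolding Tset_def
    by (auto intro!: exI[of _ "0::nat"])
  fix g h assume "g \<in> Tset v i c" "h \<in> Tset v i c"
  then obtain x q x' q' :: nat where g: "g = a [^] x \<otimes> b [^] (c * q)" "[x = i * q] (mod v)"
    and h: "h = a [^] x' \<otimes> b [^] (c * q')" "[x' = i * q'] (mod v)" unfolding Tset_def by blast
  have e: "g \<otimes> h = a [^] (x + x' * s ^ (c * q)) \<otimes> b [^] (c * (q + q'))"
    unfolding g h prodform by (simp add: distrib_left)
  have "[(s ^ c) ^ q = 1 ^ q] (mod v)" by (rule cong_pow[OF sc])
  then have "[s ^ (c * q) = 1] (mod v)" by (simp add: power_mult)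
  then have "[x + x' * s ^ (c * q) = i * q + i * q' * 1] (mod v)" by (intro cong_add cong_mult g(2) h(2))
  then have "[x + x' * s ^ (c * q) = i * (q + q')] (mod v)" by (simp add: algebra_simps)
  then show "g \<otimes> h \<in> Tset v i c" unfolding Tset_def using e by auto
qed

lemma Hs_T: assumes "cond v i c" shows "Hs v i c \<subseteq> Tset v i c"
  unfolding Hs_def
proof (rule generate_subgroup_incl[OF _ T_sub[OF cond_sc(2)[OF assms]]])
  have "a [^] v = a [^] v \<otimes> b [^] (c * 0) \<and> [v = i * 0] (mod v)" by (simp add: cong_def)
  moreover have "a [^] v \<in> carrier G" by simp
  ultimately have "a [^] v \<in> Tset v i c" unfolding Tset_def by blast
  moreover have "a [^] i \<otimes> b [^] c \<in> Tset v i c"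
  proof -
    have "a [^] i \<otimes> b [^] c = a [^] i \<otimes> b [^] (c * 1) \<and> [i = i * 1] (mod v)" by simp
    moreover have "a [^] i \<otimes> b [^] c \<in> carrier G" by simp
    ultimately show ?thesis unfolding Tset_def by blast
  qed
  ultimately show "{a [^] v, a [^] i \<otimes> b [^] c} \<subseteq> Tset v i c" by simp
qed

lemma T2a: assumes cd: "cond v i c" shows "a [^] (m::nat) \<in> Hs v i c \<longleftrightarrow> v dvd m"
proof
  assume "v dvd m" then show "a [^] m \<in> Hs v i c" using apow_in_sub[OF Hs_sub Hs_gens(1)] by blast
next
  assume "a [^] m \<in> Hs v i c"
  then have "a [^] m \<in> Tset v i c" using Hs_T[OF cd] by blast
  then obtain x q :: nat where e: "a [^] m = a [^] x \<otimes> b [^] (c * q)" and xq: "[x = i * q] (mod v)"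
    unfolding Tset_def by blast
  have "a [^] m \<otimes> b [^] (0::nat) = a [^] x \<otimes> b [^] (c * q)" using e by simp
  then have "0 mod t = (c * q) mod t" by (rule U2)
  then have tq: "t dvd c * q" by auto
  define d where "d = t div c"
  have td: "t = c * d" using cd unfolding cond_def d_def by simp
  have "c * d dvd c * q" using tq td by simp
  then have "d dvd q" using cd unfolding cond_def by simp
  then obtain p where q: "q = d * p" by blast
  have "b [^] (c * q) = a [^] (k * p)"
  proof -
    have "b [^] (c * q) = (b [^] t) [^] p" by (simp add: q td nat_pow_pow mult.assoc)
    also have "\<dots> = a [^] (k * p)" by (simp add: bt nat_pow_pow)
    finally show ?thesis .
  qed
  then have "a [^] m = a [^] (x + k * p)" using e by (simp add: nat_pow_mult)
  then have "[m = x + k * p] (mod n)" by (rule apow_eq)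
  then have c1: "[m = x + k * p] (mod v)" using cd unfolding cond_def by (blast intro: cong_dvd_modulus_nat)
  have "[x + k * p = i * q + k * p] (mod v)" by (intro cong_add xq cong_refl)
  then have "[m = (k + i * d) * p] (mod v)" using c1 unfolding q by (simp add: algebra_simps cong_trans)
  moreover have "v dvd (k + i * d) * p" using cd unfolding cond_def d_def by simp
  ultimately show "v dvd m" using cong_dvd_iff by blast
qed

lemma T2b: assumes cd: "cond v i c" shows "(\<exists>z::nat. a [^] z \<otimes> b [^] (y::nat) \<in> Hs v i c) \<longleftrightarrow> c dvd y"
proof
  assume "c dvd y"
  then obtain q where y: "y = c * q" by blast
  obtain z :: nat where z: "(a [^] i \<otimes> b [^] c) [^] q = a [^] z \<otimes> b [^] (c * q)"
    using powform0 by blast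
  have "(a [^] i \<otimes> b [^] c) [^] q \<in> Hs v i c"
    by (rule subgroup_nat_pow_closed[OF Hs_sub Hs_gens(2)])
  then show "\<exists>z::nat. a [^] z \<otimes> b [^] y \<in> Hs v i c" using z y by auto
next
  assume "\<exists>z::nat. a [^] z \<otimes> b [^] y \<in> Hs v i c"
  then obtain z :: nat where "a [^] z \<otimes> b [^] y \<in> Hs v i c" by blast
  then have "a [^] z \<otimes> b [^] y \<in> Tset v i c" using Hs_T[OF cd] by blast
  then obtain x q :: nat where e: "a [^] z \<otimes> b [^] y = a [^] x \<otimes> b [^] (c * q)"
    unfolding Tset_def by blast
  have "y mod t = (c * q) mod t" using U2[OF e] .
  moreover have ct: "c dvd t" using cd unfolding cond_def by simp
  ultimately have "y mod t mod c = (c * q) mod t mod c" by simp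
  then have "y mod c = 0" using ct by (simp add: mod_mod_cancel)
  then show "c dvd y" by auto
qed

lemma T2c: assumes cd: "cond v i c" shows "a [^] (x::nat) \<otimes> b [^] c \<in> Hs v i c \<longleftrightarrow> [x = i] (mod v)"
proof
  assume "[x = i] (mod v)"
  then have "x mod v = i" using cd unfolding cond_def cong_def by simp
  then have "x = v * (x div v) + i" by (metis div_mult_mod_eq mult.commute)
  then have "a [^] x \<otimes> b [^] c = (a [^] v) [^] (x div v) \<otimes> (a [^] i \<otimes> b [^] c)"
    by (metis ac nat_pow_pow nat_pow_mult m_assoc nat_pow_closed bc)
  moreover have "(a [^] v) [^] (x div v) \<in> Hs v i c" by (rule subgroup_nat_pow_closed[OF Hs_sub Hs_gens(1)])
  ultimately show "a [^] x \<otimes> b [^] c \<in> Hs v i c"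
    using Hs_gens(2) by (simp add: subgroup.m_closed[OF Hs_sub])
next
  assume "a [^] x \<otimes> b [^] c \<in> Hs v i c"
  then have "a [^] (x + (n - 1) * i) \<in> Hs v i c" using diffl[OF Hs_sub _ Hs_gens(2)] by blast
  then have "v dvd x + (n - 1) * i" using T2a[OF cd] by blast
  then show "[x = i] (mod v)" using congfix cd unfolding cond_def by blast
qed

end



context pres begin

lemma inv_cancel2: "x \<in> carrier G \<Longrightarrow> y \<in> carrier G \<Longrightarrow> inv x \<otimes> (x \<otimes> y) = y"
  by (simp add: m_assoc[symmetric])

lemma conja: "inv a \<otimes> (a [^] (i::nat) \<otimes> b [^] (c::nat)) \<otimes> inv (inv a) = a [^] (n - 1 + i + s ^ c) \<otimes> b [^] c"
proof -
  have "inv a \<otimes> (a [^] i \<otimes> b [^] c) \<otimes> inv (inv a)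
      = (a [^] (n - 1) \<otimes> b [^] (0::nat)) \<otimes> (a [^] i \<otimes> b [^] c) \<otimes> (a [^] (1::nat) \<otimes> b [^] (0::nat))"
  proof -
    have ii: "inv (inv a) = a" by simp
    have ia: "inv a = a [^] (n - 1)" using inv_apow[of 1] by simp
    show ?thesis by (simp only: ii) (simp add: ia)
  qed
  also have "\<dots> = a [^] (n - 1 + i * s ^ 0 + 1 * s ^ (0 + c)) \<otimes> b [^] (0 + c + 0)"
    by (simp only: prodform)
  also have "\<dots> = a [^] (n - 1 + i + s ^ c) \<otimes> b [^] c" by simp
  finally show ?thesis .
qed

lemma conjb: "inv b \<otimes> (a [^] (i::nat) \<otimes> b [^] (c::nat)) \<otimes> inv (inv b) = a [^] (i * r) \<otimes> b [^] c"
proof -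
  have "inv b \<otimes> (a [^] i \<otimes> b [^] c) \<otimes> inv (inv b) = inv b \<otimes> ((a [^] i \<otimes> b) \<otimes> b [^] c)"
    by (simp add: m_assoc nat_pow_Suc2[symmetric] del: nat_pow_Suc)
  also have "\<dots> = a [^] (i * r) \<otimes> b [^] c" by (simp add: comm2 m_assoc inv_cancel2)
  finally show ?thesis .
qed

lemma conjav: "inv a \<otimes> a [^] (v::nat) \<otimes> inv (inv a) = a [^] v"
proof -
  have "a [^] v \<otimes> a = a \<otimes> a [^] v" by (simp add: nat_pow_Suc2[symmetric] del: nat_pow_Suc)
  then show ?thesis by (simp add: m_assoc inv_cancel2)
qed

lemma conjbv: "inv b \<otimes> a [^] (v::nat) \<otimes> inv (inv b) = (a [^] v) [^] r"
proof -
  have "inv b \<otimes> a [^] v \<otimes> inv (inv b) = inv b \<otimes> (a [^] v \<otimes> b)" by (simp add: m_assoc)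
  also have "\<dots> = a [^] (v * r)" by (simp add: comm2 inv_cancel2)
  finally show ?thesis by (simp add: nat_pow_pow)
qed

lemma a_from_inv: "a = (inv a) [^] (n - 1)"
proof -
  have "a \<otimes> a [^] (n - 1) = \<one>" using n an by (simp add: nat_pow_Suc2[symmetric] del: nat_pow_Suc)
  then have "inv (a [^] (n - 1)) = a" by (intro inv_equality) simp_all
  then show ?thesis by (simp add: nat_pow_inv)
qed

lemma b_from_inv: "b = (inv b) [^] (n * t - 1)"
proof -
  have "n * t > 0" using n t by simp
  then have "b \<otimes> b [^] (n * t - 1) = \<one>" using bnt by (simp add: nat_pow_Suc2[symmetric] del: nat_pow_Suc)
  then have "inv (b [^] (n * t - 1)) = b" by (intro inv_equality) simp_all
  then show ?thesis by (simp add: nat_pow_inv)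
qed

lemma t1: "inv a \<otimes> a [^] (v::nat) \<otimes> inv (inv a) \<in> generate G {a [^] v, a [^] (i::nat) \<otimes> b [^] (c::nat)}"
  unfolding conjav by (rule generate.incl) simp

lemma t2: assumes cd: "cond v i c" shows "[n - 1 + i + s ^ c = i] (mod v)"
proof -
    have sc: "[s ^ c = 1] (mod v)" using cond_sc[OF cd] by simp
    have c1: "[n - 1 + i + s ^ c = n - 1 + i + 1] (mod v)" by (intro cong_add cong_refl sc)
    have eq: "n - 1 + i + 1 = i + n" using n by simp
    have "[i + n = i + 0] (mod v)" using cd unfolding cond_def by (intro cong_add cong_refl) (simp add: cong_0_iff)
    then have "[n - 1 + i + 1 = i] (mod v)" by (subst eq) simp
    then show "[n - 1 + i + s ^ c = i] (mod v)" by (rule cong_trans[OF c1])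
qed

lemma t3: assumes cd: "cond v i c" shows "inv a \<otimes> (a [^] i \<otimes> b [^] c) \<otimes> inv (inv a) \<in> Hs v i c"
proof -
  have "a [^] (n - 1 + i + s ^ c) \<otimes> b [^] c \<in> Hs v i c" using T2c[OF cd] t2[OF cd] by blast
  then show ?thesis unfolding conja .
qed

lemma t4: assumes cd: "cond v i c" and y: "y \<in> {a [^] v, a [^] i \<otimes> b [^] c}"
  shows "inv a \<otimes> y \<otimes> inv (inv a) \<in> generate G {a [^] v, a [^] i \<otimes> b [^] c}"
  using y t1[of v i c] t3[OF cd] unfolding Hs_def by blast

lemma t5: assumes cd: "cond v i c" and y: "y \<in> {a [^] v, a [^] i \<otimes> b [^] c}"
  shows "inv b \<otimes> y \<otimes> inv (inv b) \<in> generate G {a [^] v, a [^] i \<otimes> b [^] c}"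
proof -
  have "(a [^] v) [^] r \<in> Hs v i c" by (rule subgroup_nat_pow_closed[OF Hs_sub Hs_gens(1)])
  then have 1: "inv b \<otimes> a [^] v \<otimes> inv (inv b) \<in> Hs v i c"
    unfolding conjbv .
  have "[i * r = i] (mod v)" using cd unfolding cond_def by simp
  then have "a [^] (i * r) \<otimes> b [^] c \<in> Hs v i c" using T2c[OF cd] by blast
  then have 2: "inv b \<otimes> (a [^] i \<otimes> b [^] c) \<otimes> inv (inv b) \<in> Hs v i c"
    unfolding conjb .
  show ?thesis using y 1 2 unfolding Hs_def by blast
qed

lemma conj_mult: "g1 \<in> carrier G \<Longrightarrow> g2 \<in> carrier G \<Longrightarrow> h \<in> carrier G \<Longrightarrow>
   g1 \<otimes> g2 \<otimes> h \<otimes> inv (g1 \<otimes> g2) = g1 \<otimes> (g2 \<otimes> h \<otimes> inv g2) \<otimes> inv g1"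
  by (simp add: inv_mult_group m_assoc)

lemma T1: assumes cd: "cond v i c" shows "Hs v i c \<lhd> G"
proof -
  have sg: "subgroup (Hs v i c) G" by (rule Hs_sub)
  define Q where "Q g \<longleftrightarrow> g \<in> carrier G \<and> (\<forall>h\<in>Hs v i c. g \<otimes> h \<otimes> inv g \<in> Hs v i c)" for g
  have Qmult: "Q (g1 \<otimes> g2)" if q1: "Q g1" and q2: "Q g2" for g1 g2
  proof -
    have c1: "g1 \<in> carrier G" using q1 unfolding Q_def by blast
    have c2: "g2 \<in> carrier G" using q2 unfolding Q_def by blast
    have "g1 \<otimes> g2 \<otimes> h \<otimes> inv (g1 \<otimes> g2) \<in> Hs v i c" if h: "h \<in> Hs v i c" for h
    proof -
      have hc: "h \<in> carrier G" using subgroup.mem_carrier[OF sg h] .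
      have "g2 \<otimes> h \<otimes> inv g2 \<in> Hs v i c" using q2 h unfolding Q_def by blast
      then have "g1 \<otimes> (g2 \<otimes> h \<otimes> inv g2) \<otimes> inv g1 \<in> Hs v i c" using q1 unfolding Q_def by blast
      moreover have "g1 \<otimes> g2 \<otimes> h \<otimes> inv (g1 \<otimes> g2) = g1 \<otimes> (g2 \<otimes> h \<otimes> inv g2) \<otimes> inv g1"
        by (rule conj_mult[OF c1 c2 hc])
      ultimately show ?thesis by simp
    qed
    moreover have "g1 \<otimes> g2 \<in> carrier G" using c1 c2 by simp
    ultimately show ?thesis unfolding Q_def by blast
  qed
  have Q1: "Q \<one>" unfolding Q_def using sg by (auto simp: subgroup.mem_carrier)
  have Qpow: "Q (g [^] (m::nat))" if "Q g" for g m
    by (induction m) (use Q1 Qmult that in auto)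
  have S': "{a [^] v, a [^] i \<otimes> b [^] c} \<subseteq> carrier G" by simp
  have Qia: "Q (inv a)" unfolding Q_def
  proof (intro conjI ballI)
    show "inv a \<in> carrier G" by simp
    fix h assume "h \<in> Hs v i c"
    then show "inv a \<otimes> h \<otimes> inv (inv a) \<in> Hs v i c" unfolding Hs_def
      using conj_gen[OF S' inv_closed[OF ac] t4[OF cd]] by blast
  qed
  have Qib: "Q (inv b)" unfolding Q_def
  proof (intro conjI ballI)
    show "inv b \<in> carrier G" by simp
    fix h assume "h \<in> Hs v i c"
    then show "inv b \<otimes> h \<otimes> inv (inv b) \<in> Hs v i c" unfolding Hs_def
      using conj_gen[OF S' inv_closed[OF bc] t5[OF cd]] by blast
  qed
  have Qa: "Q a" by (subst a_from_inv) (rule Qpow[OF Qia])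
  have Qb: "Q b" by (subst b_from_inv) (rule Qpow[OF Qib])
  have QQ: "Q g" if g: "g \<in> carrier G" for g
  proof -
    obtain x y :: nat where gxy: "g = a [^] x \<otimes> b [^] y" using form[OF g] by blast
    have "Q (a [^] x \<otimes> b [^] y)" by (rule Qmult[OF Qpow[OF Qa] Qpow[OF Qb]])
    then show ?thesis unfolding gxy .
  qed
  show ?thesis unfolding normal_inv_iff
  proof (intro conjI ballI sg)
    fix g h assume g: "g \<in> carrier G" and h: "h \<in> Hs v i c"
    show "g \<otimes> h \<otimes> inv g \<in> Hs v i c" using QQ[OF g] h unfolding Q_def by blast
  qed
qed

lemma T4: assumes c1: "cond v i c" and c2: "cond v' i' c'" and e: "Hs v i c = Hs v' i' c'"
  shows "v = v' \<and> i = i' \<and> c = c'"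
proof -
  have "v dvd v'" using Hs_gens(1)[where v=v' and i=i' and c=c'] e T2a[OF c1] by simp
  moreover have "v' dvd v" using Hs_gens(1)[where v=v and i=i and c=c] e T2a[OF c2] by simp
  ultimately have vv: "v = v'" by (rule dvd_antisym)
  have "c dvd c'" using Hs_gens(2)[where v=v' and i=i' and c=c'] e T2b[OF c1, of c'] by auto
  moreover have "c' dvd c" using Hs_gens(2)[where v=v and i=i and c=c] e T2b[OF c2, of c] by auto
  ultimately have cc: "c = c'" by (rule dvd_antisym)
  have "[i' = i] (mod v)" using Hs_gens(2)[where v=v' and i=i' and c=c'] e T2c[OF c1, of i'] cc by simp
  then have "i' = i" using c1 c2 vv unfolding cond_def by (blast intro: cong_less_modulus_unique_nat)
  then show ?thesis using vv cc by simp
qed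


lemma Tsurj: assumes N: "N \<lhd> G" shows "\<exists>v i c. cond v i c \<and> N = Hs v i c"
proof -
  have sg: "subgroup N G" using N by (rule normal_imp_subgroup)
  have Nc: "x \<in> N \<Longrightarrow> x \<in> carrier G" for x using subgroup.mem_carrier[OF sg] .
  define P where "P v \<longleftrightarrow> 0 < v \<and> a [^] v \<in> N" for v :: nat
  define v where "v = Least P"
  have "P n" unfolding P_def using n an subgroup.one_closed[OF sg] by simp
  then have Pv: "P v" unfolding v_def by (rule LeastI)
  have vmin: "\<not> P u" if "u < v" for u using not_less_Least[of u P] that unfolding v_def by blast
  have v0: "0 < v" and av: "a [^] v \<in> N" using Pv unfolding P_def by auto
  have Adiv: "a [^] (m::nat) \<in> N \<longleftrightarrow> v dvd m" for m
  proof
    assume "v dvd m" then show "a [^] m \<in> N" using apow_in_sub[OF sg av] by blast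
  next
    assume am: "a [^] m \<in> N"
    have "a [^] m = (a [^] v) [^] (m div v) \<otimes> a [^] (m mod v)"
    proof -
      have "a [^] m = a [^] (v * (m div v) + m mod v)" by simp
      also have "\<dots> = (a [^] v) [^] (m div v) \<otimes> a [^] (m mod v)"
        by (simp only: nat_pow_mult[symmetric] nat_pow_pow ac)
      finally show ?thesis .
    qed
    then have "a [^] (m mod v) = inv ((a [^] v) [^] (m div v)) \<otimes> a [^] m"
      by (simp add: inv_solve_left)
    moreover have "inv ((a [^] v) [^] (m div v)) \<in> N"
      using subgroup.m_inv_closed[OF sg subgroup_nat_pow_closed[OF sg av]] .
    ultimately have "a [^] (m mod v) \<in> N" using am subgroup.m_closed[OF sg] by simp
    moreover have "m mod v < v" using v0 by simp
    ultimately have "m mod v = 0" using vmin unfolding P_def by auto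
    then show "v dvd m" by auto
  qed
  have vn: "v dvd n" using Adiv[of n] an subgroup.one_closed[OF sg] by simp
  define R where "R c \<longleftrightarrow> 0 < c \<and> (\<exists>z::nat. a [^] z \<otimes> b [^] c \<in> N)" for c :: nat
  define c where "c = Least R"
  have "R t"
  proof -
    define z where "z = n - k mod n"
    have km: "k mod n < n" using n by simp
    have kk: "k div n * n + k mod n = k" by simp
    have "z + k = n + k div n * n" unfolding z_def using km kk by linarith
    then have "z + k = n * (k div n + 1)" by simp
    then have "[z + k = 0] (mod n)" by (simp add: cong_0_iff)
    then have "a [^] (z + k) = a [^] (0::nat)" by (rule apow_cong)
    then have "a [^] z \<otimes> b [^] t = \<one>" by (simp add: bt nat_pow_mult)
    then show ?thesis unfolding R_def using t subgroup.one_closed[OF sg] by metis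
  qed
  then have Rc: "R c" unfolding c_def by (rule LeastI)
  have cmin: "\<not> R u" if "u < c" for u using not_less_Least[of u R] that unfolding c_def by blast
  have c0: "0 < c" using Rc unfolding R_def by simp
  obtain z0 :: nat where z0: "a [^] z0 \<otimes> b [^] c \<in> N" using Rc unfolding R_def by blast
  have Bdiv: "c dvd y" if "a [^] (z::nat) \<otimes> b [^] (y::nat) \<in> N" for z y
  proof -
    define q \<rho> where "q = y div c" "\<rho> = y mod c"
    have y: "y = \<rho> + c * q" unfolding q_\<rho>_def by simp
    obtain z1 :: nat where z1: "(a [^] z0 \<otimes> b [^] c) [^] q = a [^] z1 \<otimes> b [^] (c * q)"
      using powform0 by blast
    have "a [^] z1 \<otimes> b [^] (c * q) \<in> N" using subgroup_nat_pow_closed[OF sg z0, of q] z1 by simp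
    moreover have "a [^] z \<otimes> b [^] (\<rho> + c * q) \<in> N" using that y by simp
    ultimately have "a [^] (z + (n - 1) * z1 * s ^ \<rho>) \<otimes> b [^] \<rho> \<in> N" by (intro elim[OF sg])
    then have "\<not> (0 < \<rho>)" using cmin[of \<rho>] unfolding R_def q_\<rho>_def using c0 by auto
    then show ?thesis unfolding q_\<rho>_def by auto
  qed
  have ct: "c dvd t" using \<open>R t\<close> Bdiv unfolding R_def by blast
  define i where "i = z0 mod v"
  have iv: "i < v" unfolding i_def using v0 by simp
  have wN: "a [^] i \<otimes> b [^] c \<in> N"
  proof -
    have "a [^] z0 = (a [^] v) [^] (z0 div v) \<otimes> a [^] i"
    proof -
      have "a [^] z0 = a [^] (v * (z0 div v) + z0 mod v)" by simp
      also have "\<dots> = (a [^] v) [^] (z0 div v) \<otimes> a [^] i"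
        unfolding i_def by (simp only: nat_pow_mult[symmetric] nat_pow_pow ac)
      finally show ?thesis .
    qed
    then have "a [^] i \<otimes> b [^] c = inv ((a [^] v) [^] (z0 div v)) \<otimes> (a [^] z0 \<otimes> b [^] c)"
      by (simp add: m_assoc inv_cancel2)
    moreover have "inv ((a [^] v) [^] (z0 div v)) \<in> N"
      using subgroup.m_inv_closed[OF sg subgroup_nat_pow_closed[OF sg av]] .
    ultimately show ?thesis using z0 subgroup.m_closed[OF sg] by simp
  qed
  have ir: "[i * r = i] (mod v)"
  proof -
    have "inv b \<otimes> (a [^] i \<otimes> b [^] c) \<otimes> inv (inv b) \<in> N"
      using normal.inv_op_closed2[OF N inv_closed[OF bc] wN] .
    then have "a [^] (i * r) \<otimes> b [^] c \<in> N" unfolding conjb .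
    then have "a [^] (i * r + (n - 1) * i) \<in> N" using diffl[OF sg _ wN] by blast
    then have "v dvd i * r + (n - 1) * i" using Adiv by blast
    then show ?thesis using congfix[OF vn] by blast
  qed
  have sc: "[s ^ c = 1] (mod v)"
  proof -
    have "inv a \<otimes> (a [^] i \<otimes> b [^] c) \<otimes> inv (inv a) \<in> N"
      using normal.inv_op_closed2[OF N inv_closed[OF ac] wN] .
    then have "a [^] (n - 1 + i + s ^ c) \<otimes> b [^] c \<in> N" unfolding conja .
    then have "a [^] (n - 1 + i + s ^ c + (n - 1) * i) \<in> N" using diffl[OF sg _ wN] by blast
    then have "v dvd n - 1 + i + s ^ c + (n - 1) * i" using Adiv by blast
    then have 1: "[n - 1 + i + s ^ c = i] (mod v)" using congfix[OF vn] by blast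
    have eq: "n - 1 + i + s ^ c = (n - 1 + s ^ c) + i" by simp
    have "[(n - 1 + s ^ c) + i = 0 + i] (mod v)" using 1 by (simp only: eq add_0_left)
    then have "[n - 1 + s ^ c = 0] (mod v)" by (rule cong_add_rcancel_nat[THEN iffD1])
    then have "[n - 1 + s ^ c + 1 = 0 + 1] (mod v)" by (intro cong_add cong_refl)
    moreover have "n - 1 + s ^ c + 1 = s ^ c + n" using n by simp
    ultimately have 2: "[s ^ c + n = 1] (mod v)" by (simp add: add.commute)
    have "[s ^ c + n = s ^ c + 0] (mod v)" using vn by (intro cong_add cong_refl) (simp add: cong_0_iff)
    then have "[s ^ c = s ^ c + n] (mod v)" by (simp add: cong_sym)
    then show ?thesis using 2 by (rule cong_trans)
  qed
  have rc: "[r ^ c = 1] (mod v)"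
  proof -
    have "[s * r = 1] (mod v)" using sr vn by (blast intro: cong_dvd_modulus_nat)
    then have "[(s * r) ^ c = 1 ^ c] (mod v)" by (rule cong_pow)
    then have 1: "[r ^ c * s ^ c = 1] (mod v)" by (simp add: power_mult_distrib mult.commute)
    have "[r ^ c * s ^ c = r ^ c * 1] (mod v)" by (intro cong_mult cong_refl sc)
    then have "[r ^ c = r ^ c * s ^ c] (mod v)" by (simp add: cong_sym)
    then show ?thesis using 1 by (rule cong_trans)
  qed
  have ordc: "Pocklington.ord v r dvd c" using rc by (rule ord_divides[THEN iffD1])
  have kd: "v dvd k + i * (t div c)"
  proof -
    obtain z :: nat where z: "(a [^] i \<otimes> b [^] c) [^] (t div c) = a [^] z \<otimes> b [^] (c * (t div c))"
      and zc: "[z = i * (t div c)] (mod v)" using powform[OF sc] by blast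
    have "c * (t div c) = t" using ct by simp
    then have "(a [^] i \<otimes> b [^] c) [^] (t div c) = a [^] (z + k)" using z by (simp add: bt nat_pow_mult)
    moreover have "(a [^] i \<otimes> b [^] c) [^] (t div c) \<in> N" by (rule subgroup_nat_pow_closed[OF sg wN])
    ultimately have "v dvd z + k" using Adiv by simp
    moreover have "[z + k = i * (t div c) + k] (mod v)" by (intro cong_add zc cong_refl)
    ultimately have "v dvd i * (t div c) + k" using cong_dvd_iff by blast
    then show ?thesis by (simp add: add.commute)
  qed
  have cd: "cond v i c" unfolding cond_def using v0 vn c0 ct iv kd ordc ir by simp
  have "N = Hs v i c"
  proof
    show "Hs v i c \<subseteq> N" unfolding Hs_def using av wN by (intro generate_subgroup_incl[OF _ sg]) simp
    show "N \<subseteq> Hs v i c"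
    proof
      fix g assume gN: "g \<in> N"
      obtain x y :: nat where g: "g = a [^] x \<otimes> b [^] y" using form[OF Nc[OF gN]] by blast
      have "c dvd y" using Bdiv gN g by blast
      then obtain q where y: "y = c * q" by blast
      obtain z1 :: nat where z1: "(a [^] i \<otimes> b [^] c) [^] q = a [^] z1 \<otimes> b [^] (c * q)"
        using powform0 by blast
      have wq: "(a [^] i \<otimes> b [^] c) [^] q \<in> Hs v i c" by (rule subgroup_nat_pow_closed[OF Hs_sub Hs_gens(2)])
      have "a [^] z1 \<otimes> b [^] (c * q) \<in> N" using subgroup_nat_pow_closed[OF sg wN, of q] z1 by simp
      then have "a [^] (x + (n - 1) * z1) \<in> N" using diffl[OF sg] gN g y by blast
      then have "v dvd x + (n - 1) * z1" using Adiv by blast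
      then have aH: "a [^] (x + (n - 1) * z1) \<in> Hs v i c" using T2a[OF cd] by blast
      have "a [^] (x + (n - 1) * z1) \<otimes> (a [^] i \<otimes> b [^] c) [^] q
          = (a [^] (x + (n - 1) * z1) \<otimes> b [^] (0::nat)) \<otimes> (a [^] z1 \<otimes> b [^] (c * q))"
        using z1 by simp
      also have "\<dots> = a [^] (x + (n - 1) * z1 + z1 * s ^ 0) \<otimes> b [^] (0 + c * q)" by (rule prodform)
      also have "a [^] (x + (n - 1) * z1 + z1 * s ^ 0) = a [^] x"
      proof (rule apow_cong)
        have "x + (n - 1) * z1 + z1 * s ^ 0 = x + n * z1" using n by (cases n) simp_all
        moreover have "[x + n * z1 = x + 0] (mod n)" by (intro cong_add cong_refl) (simp add: cong_0_iff)
        ultimately show "[x + (n - 1) * z1 + z1 * s ^ 0 = x] (mod n)" by (simp add: add.assoc)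
      qed
      finally have "g = a [^] (x + (n - 1) * z1) \<otimes> (a [^] i \<otimes> b [^] c) [^] q" using g y by simp
      then show "g \<in> Hs v i c" using aH wq subgroup.m_closed[OF Hs_sub] by simp
    qed
  qed
  then show ?thesis using cd by blast
qed

end



lemma cong_int_dvd: "[i * r = i] (mod v) \<longleftrightarrow> int v dvd int i * (int r - 1)"
proof -
  have "int i * (int r - 1) = int (i * r) - int i" by (simp add: algebra_simps)
  then show ?thesis by (simp add: cong_int_iff[symmetric] cong_iff_dvd_diff)
qed

lemma Nset_char: "x \<in> Nset n t k r \<longleftrightarrow> (\<exists>v i c::nat. x = (int v, int i, int c) \<and>
   (0 < v \<and> v dvd n \<and> 0 < c \<and> c dvd t \<and> i < v \<and> v dvd k + i * (t div c)
     \<and> Pocklington.ord v r dvd c \<and> [i * r = i] (mod v)))"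
proof
  assume "x \<in> Nset n t k r"
  then obtain V I C where x: "x = (V, I, C)" and h: "V > 0" "V dvd int n" "C > 0" "C dvd int t" "0 \<le> I" "I \<le> V - 1"
     "V dvd int k + I * (int t div C)" "int (ov r V) dvd C" "V dvd I * (int r - 1)"
    unfolding Nset_def by blast
  define v i c where "v = nat V" "i = nat I" "c = nat C"
  have VV: "V = int v" "I = int i" "C = int c" unfolding v_i_c_def using h(1,3,5) by simp_all
  have e1: "int (k + i * (t div c)) = int k + I * (int t div C)" unfolding VV by (simp add: zdiv_int)
  have "int v dvd int (k + i * (t div c))" unfolding e1 using h(7) VV(1) by simp
  then have d: "v dvd k + i * (t div c)" by (simp only: int_dvd_int_iff)
  have "int (Pocklington.ord v r) dvd int c" using h(8) unfolding ov_def VV by simp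
  then have o: "Pocklington.ord v r dvd c" by (simp only: int_dvd_int_iff)
  have cg: "[i * r = i] (mod v)" using h(9) cong_int_dvd[of i r v] unfolding VV by simp
  have p1: "0 < v" "0 < c" using h(1,3) VV by simp_all
  have p2: "v dvd n" "c dvd t" using h(2,4) VV by simp_all
  have p3: "i < v" using h(6) VV by simp
  have "x = (int v, int i, int c)" using x VV by simp
  then show "\<exists>v i c::nat. x = (int v, int i, int c) \<and>
   (0 < v \<and> v dvd n \<and> 0 < c \<and> c dvd t \<and> i < v \<and> v dvd k + i * (t div c)
     \<and> Pocklington.ord v r dvd c \<and> [i * r = i] (mod v))"
    using p1 p2 p3 d o cg by blast
next
  assume "\<exists>v i c::nat. x = (int v, int i, int c) \<and>
   (0 < v \<and> v dvd n \<and> 0 < c \<and> c dvd t \<and> i < v \<and> v dvd k + i * (t div c)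
     \<and> Pocklington.ord v r dvd c \<and> [i * r = i] (mod v))"
  then obtain v i c :: nat where x: "x = (int v, int i, int c)" and h: "0 < v" "v dvd n" "0 < c" "c dvd t" "i < v"
     "v dvd k + i * (t div c)" "Pocklington.ord v r dvd c" "[i * r = i] (mod v)" by blast
  have e1: "int (k + i * (t div c)) = int k + int i * (int t div int c)" by (simp add: zdiv_int)
  have "int v dvd int (k + i * (t div c))" using h(6) by (simp only: int_dvd_int_iff)
  then have d: "int v dvd int k + int i * (int t div int c)" unfolding e1 .
  have o: "int (ov r (int v)) dvd int c" unfolding ov_def using h(7) by simp
  have cg: "int v dvd int i * (int r - 1)" using h(8) cong_int_dvd[of i r v] by simp
  have p: "int v > 0" "int v dvd int n" "int c > 0" "int c dvd int t" "0 \<le> int i" "int i \<le> int v - 1"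
    using h(1-5) by simp_all
  show "x \<in> Nset n t k r" unfolding Nset_def x using p d o cg by simp
qed

theorem lemma1:
  fixes G :: "('g, 'm) monoid_scheme" and a b :: 'g and n t k r :: nat
  assumes "n > 0" and "t > 0"
    and "presented_by G a b n t k r"
    and "[r ^ t = 1] (mod n)"
    and "[int k * (int r - 1) = 0] (mod int n)"
  shows "{N. N \<lhd> G} = (\<lambda>(v, i, c). Hsub G a b v i c) ` Nset n t k r
         \<and> inj_on (\<lambda>(v, i, c). Hsub G a b v i c) (Nset n t k r)"
proof -
  have kr: "[k * r = k] (mod n)"
  proof -
    have "int k * (int r - 1) = int k * int r - int k" by (simp add: algebra_simps)
    then have "[int k * int r = int k] (mod int n)" using assms(5) by (simp add: cong_diff_iff_cong_0)
    then have "[int (k * r) = int k] (mod int n)" by simp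
    then show ?thesis by (simp only: cong_int_iff)
  qed
  note mf = model_facts[OF assms(3) assms(1) assms(2) assms(4) kr]
  have pb: "group G" "a \<in> carrier G" "b \<in> carrier G" "generate G {a, b} = carrier G" "rels G a b n t k r"
    using assms(3) unfolding presented_by_def by auto
  have ax: "pres_axioms G a b n t k r"
    unfolding pres_axioms_def using pb(2-5) assms(1,2,4) kr mf unfolding rels_def by blast
  interpret P: pres G a b n t k r by (rule pres.intro[OF pb(1) ax])
  have Hi: "Hsub G a b (int v) (int i) (int c) = P.Hs v i c" for v i c :: nat
    unfolding Hsub_def P.Hs_def by (simp add: int_pow_int)
  have NC: "x \<in> Nset n t k r \<longleftrightarrow> (\<exists>v i c::nat. x = (int v, int i, int c) \<and> P.cond v i c)" for x
    unfolding Nset_char P.cond_def ..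
  show ?thesis
  proof
    show "{N. N \<lhd> G} = (\<lambda>(v, i, c). Hsub G a b v i c) ` Nset n t k r"
    proof
      show "{N. N \<lhd> G} \<subseteq> (\<lambda>(v, i, c). Hsub G a b v i c) ` Nset n t k r"
      proof
        fix N assume "N \<in> {N. N \<lhd> G}"
        then obtain v i c where cd: "P.cond v i c" and N: "N = P.Hs v i c" using P.Tsurj by blast
        have "(int v, int i, int c) \<in> Nset n t k r" using NC cd by blast
        moreover have "N = (\<lambda>(v, i, c). Hsub G a b v i c) (int v, int i, int c)" using Hi N by simp
        ultimately show "N \<in> (\<lambda>(v, i, c). Hsub G a b v i c) ` Nset n t k r" by blast
      qed
      show "(\<lambda>(v, i, c). Hsub G a b v i c) ` Nset n t k r \<subseteq> {N. N \<lhd> G}"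
      proof
        fix N assume "N \<in> (\<lambda>(v, i, c). Hsub G a b v i c) ` Nset n t k r"
        then obtain x where x: "x \<in> Nset n t k r" and N: "N = (\<lambda>(v, i, c). Hsub G a b v i c) x" by blast
        obtain v i c where "x = (int v, int i, int c)" "P.cond v i c" using NC x by blast
        then show "N \<in> {N. N \<lhd> G}" using N Hi P.T1 by simp
      qed
    qed
    show "inj_on (\<lambda>(v, i, c). Hsub G a b v i c) (Nset n t k r)"
    proof (rule inj_onI)
      fix x y assume x: "x \<in> Nset n t k r" and y: "y \<in> Nset n t k r"
        and e: "(\<lambda>(v, i, c). Hsub G a b v i c) x = (\<lambda>(v, i, c). Hsub G a b v i c) y"
      obtain v i c where x': "x = (int v, int i, int c)" "P.cond v i c" using NC x by blast
      obtain v' i' c' where y': "y = (int v', int i', int c')" "P.cond v' i' c'" using NC y by blast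
      have "P.Hs v i c = P.Hs v' i' c'" using e x'(1) y'(1) Hi by simp
      then have "v = v' \<and> i = i' \<and> c = c'" using P.T4 x'(2) y'(2) by blast
      then show "x = y" using x'(1) y'(1) by simp
    qed
  qed
qed


end
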